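(* Let $K$ be a finite field of characteristic $p$ and order $q$, let $s$ be a positive integer with $\gcd(s,q-1)=1$, let $k$ be a positive integer and $t=(t_1,\dots,t_k)\in(K^\times)^k$. Then in the group algebra $L[K^\times]$, $$W^{[t]}=W\,V^{[t]},$$ where $W=\sum_{u\in K^\times}W_u[u]$, $W^{[t]}=\sum_{u\in K^\times}W_{t_1u}\cdots W_{t_ku}[u]$ and $V^{[t]}=\sum_{u\in K^\times}(Q^t_{1,u}-Q^t_{1,0})[u]$.
   Context: $\zeta=\exp(2\pi i/p)$, $\psi(x)=\zeta^{\mathrm{Tr}(x)}$ with $\mathrm{Tr}$ the absolute trace of $K$ to $\mathbb{F}_p$; $W_u=\sum_{x\in K}\psi(x^s-ux)$. $L=\mathbb{Q}(\zeta,\xi)$ with $\xi=\exp(2\pi i/(q-1))$, and $L[K^\times]$ is the group algebra of $K^\times$ over $L$, elements written $\sum_u S_u[u]$. Let $1/s$ denote the inverse of $s$ modulo $q-1$. For $a,b\in K$, $Q^t_{a,b}$ is the number of $v=(v_1,\dots,v_k)\in K^k$ with $t_1v_1+\cdots+t_kv_k=a$ and $(v_1^s+\cdots+v_k^s)^{1/s}=b$. *)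

theory Defs
  imports "HOL-Analysis.Analysis" "HOL-Number_Theory.Cong"
begin

(* K is modelled as a finite field type 'a :: {field, finite};
   p = CHAR('a), q = CARD('a), q = p ^ ff_deg. *)

definition ff_deg :: "'a::{field,finite} itself \<Rightarrow> nat" where
  "ff_deg _ = (LEAST n. CHAR('a) ^ n = CARD('a))"

(* absolute trace K -> F_p (values in the prime subfield of K) *)
definition abs_trace :: "'a::{field,finite} \<Rightarrow> 'a" where
  "abs_trace x = (\<Sum>j<ff_deg TYPE('a). x ^ (CHAR('a) ^ j))"

(* representative in {0..p-1} of the trace, viewed as an element of F_p *)
definition trace_nat :: "'a::{field,finite} \<Rightarrow> nat" where
  "trace_nat x = (LEAST m. of_nat m = abs_trace x)"

definition psi :: "'a::{field,finite} \<Rightarrow> complex" where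
  "psi x = exp (2 * pi * \<i> * of_nat (trace_nat x) / of_nat CHAR('a))"

definition W :: "nat \<Rightarrow> 'a::{field,finite} \<Rightarrow> complex" where
  "W s u = (\<Sum>x\<in>UNIV. psi (x ^ s - u * x))"

(* 1/s: an inverse of s modulo q-1, taken positive *)
definition inv_exp :: "'a::{field,finite} itself \<Rightarrow> nat \<Rightarrow> nat" where
  "inv_exp _ s = (SOME s'. s' > 0 \<and> [s * s' = 1] (mod (CARD('a) - 1)))"

(* Q^t_{a,b} : vectors v in K^k (functions on {..<k}) *)
definition Q :: "nat \<Rightarrow> nat \<Rightarrow> (nat \<Rightarrow> 'a::{field,finite}) \<Rightarrow> 'a \<Rightarrow> 'a \<Rightarrow> nat" where
  "Q s k t a b = card {v \<in> PiE {..<k} (\<lambda>_. UNIV).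
      (\<Sum>i<k. t i * v i) = a \<and> (\<Sum>i<k. v i ^ s) ^ inv_exp TYPE('a) s = b}"

(* multiplication in the group algebra C[K^x]; elements are coefficient
   functions K -> complex, only values at nonzero u matter *)
definition ga_mult :: "('a::field \<Rightarrow> complex) \<Rightarrow> ('a \<Rightarrow> complex) \<Rightarrow> 'a \<Rightarrow> complex" where
  "ga_mult S T u = (\<Sum>a\<in>{x. x \<noteq> 0}. \<Sum>b\<in>{x. x \<noteq> 0}. if a * b = u then S a * T b else 0)"

definition Wcoef :: "nat \<Rightarrow> 'a::{field,finite} \<Rightarrow> complex" where
  "Wcoef s u = W s u"

definition Wt_coef :: "nat \<Rightarrow> nat \<Rightarrow> (nat \<Rightarrow> 'a::{field,finite}) \<Rightarrow> 'a \<Rightarrow> complex" where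
  "Wt_coef s k t u = (\<Prod>i<k. W s (t i * u))"

definition Vt_coef :: "nat \<Rightarrow> nat \<Rightarrow> (nat \<Rightarrow> 'a::{field,finite}) \<Rightarrow> 'a \<Rightarrow> complex" where
  "Vt_coef s k t u = of_int (int (Q s k t 1 u) - int (Q s k t 1 0))"

end

theory Submission
  imports Defs "HOL-Computational_Algebra.Polynomial" "HOL-Computational_Algebra.Primes"
begin

lemma ff_prime_char: "prime CHAR('a::{field,finite})"
  by (rule prime_CHAR_semidom) (rule finite_imp_CHAR_pos, simp)

lemma ff_card_ge2: "CARD('a::{field,finite}) \<ge> 2"
proof -
  have "{0::'a, 1} \<subseteq> UNIV" by simp
  hence "card {0::'a,1} \<le> CARD('a)" by (intro card_mono) auto
  thus ?thesis by simp
qed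

lemma ff_of_nat_pow_char: "(of_nat m :: 'a::{field,finite}) ^ CHAR('a) = of_nat m"
proof (induction m)
  case 0 thus ?case using ff_prime_char[where 'a='a] by (simp add: prime_gt_0_nat)
next
  case (Suc m)
  have "(of_nat (Suc m) :: 'a) ^ CHAR('a) = (of_nat m + 1) ^ CHAR('a)" by (simp add: add.commute)
  also have "\<dots> = of_nat m ^ CHAR('a) + 1 ^ CHAR('a)"
    by (rule freshmans_dream) (simp_all add: ff_prime_char)
  finally show ?case using Suc by simp
qed

lemma ff_of_nat_mod: "(of_nat (m mod CHAR('a)) :: 'a::{field,finite}) = of_nat m"
  by (simp add: of_nat_eq_iff_cong_CHAR cong_def)

lemma ff_of_nat_inj:
  assumes "i < CHAR('a)" "j < CHAR('a)" "(of_nat i :: 'a::{field,finite}) = of_nat j"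
  shows "i = j"
  using assms by (simp add: of_nat_eq_iff_cong_CHAR cong_def)

lemma ff_prime_field_inv:
  assumes "(of_nat m :: 'a::{field,finite}) \<noteq> 0"
  shows "of_nat (m ^ (CHAR('a) - 2)) * (of_nat m :: 'a) = 1"
proof -
  let ?p = "CHAR('a)"
  have p2: "?p \<ge> 2" using ff_prime_char[where 'a='a] prime_ge_2_nat by blast
  have "(of_nat m :: 'a) ^ (?p - 2) * of_nat m * of_nat m = of_nat m ^ ?p"
    using p2 by (metis Suc_diff_Suc add_2_eq_Suc' le_add_diff_inverse2 mult.assoc power_Suc2 power_add power_one_right numeral_2_eq_2 Suc_1)
  also have "\<dots> = 1 * of_nat m" by (simp add: ff_of_nat_pow_char)
  finally have "(of_nat m :: 'a) ^ (?p - 2) * of_nat m = 1" using assms by simp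
  thus ?thesis by simp
qed


definition addsub :: "'a::{field,finite} set \<Rightarrow> bool" where
  "addsub H \<longleftrightarrow> 0 \<in> H \<and> (\<forall>a\<in>H. \<forall>b\<in>H. a + b \<in> H)"

lemma addsub_of_nat:
  assumes "addsub H" "h \<in> H" shows "of_nat m * h \<in> H"
  using assms by (induction m) (auto simp: addsub_def distrib_right)

lemma addsub_minus:
  assumes "addsub H" "h \<in> H" shows "- h \<in> H"
proof -
  have "of_nat (CHAR('a) - 1) * h \<in> H" by (rule addsub_of_nat[OF assms])
  moreover have "(of_nat (CHAR('a) - 1) :: 'a) = - 1"
  proof -
    have "CHAR('a) \<ge> 1" using ff_prime_char[where 'a='a] prime_ge_1_nat by blast
    hence "(of_nat (CHAR('a) - 1) :: 'a) + 1 = of_nat CHAR('a)"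
      by (metis of_nat_Suc Suc_diff_le diff_Suc_1 le_add_diff_inverse2 add.commute)
    thus ?thesis by (simp add: eq_neg_iff_add_eq_0)
  qed
  ultimately show ?thesis by simp
qed

lemma addsub_extend:
  fixes H :: "'a::{field,finite} set"
  assumes sub: "addsub H" and x: "x \<notin> H"
  defines "H' \<equiv> (\<lambda>(h,j). h + of_nat j * x) ` (H \<times> {..<CHAR('a)})"
  shows "addsub H'" "card H' = CHAR('a) * card H"
proof -
  let ?p = "CHAR('a)"
  have p0: "?p > 0" using ff_prime_char[where 'a='a] prime_gt_0_nat by blast
  show "addsub H'"
    unfolding addsub_def
  proof safe
    show "0 \<in> H'" unfolding H'_def using sub p0
      by (auto simp: addsub_def image_iff intro!: bexI[where x="0::'a"] bexI[where x="0::nat"])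
    fix a b assume "a \<in> H'" "b \<in> H'"
    then obtain h1 j1 h2 j2 where 1: "h1 \<in> H" "a = h1 + of_nat j1 * x"
      and 2: "h2 \<in> H" "b = h2 + of_nat j2 * x"
      unfolding H'_def by auto
    have "a + b = (h1 + h2) + of_nat ((j1 + j2) mod ?p) * x"
      using 1 2 by (simp add: ff_of_nat_mod algebra_simps)
    moreover have "h1 + h2 \<in> H" using sub 1 2 by (auto simp: addsub_def)
    moreover have "(j1 + j2) mod ?p < ?p" using p0 by simp
    ultimately show "a + b \<in> H'" unfolding H'_def by force
  qed
  have inj: "inj_on (\<lambda>(h,j). h + of_nat j * x) (H \<times> {..<?p})"
  proof (rule inj_onI, clarify)
    fix h1 j1 h2 j2
    assume h: "h1 \<in> H" "j1 < ?p" "h2 \<in> H" "j2 < ?p"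
       and eq: "h1 + of_nat j1 * x = h2 + of_nat j2 * x"
    show "h1 = h2 \<and> j1 = j2"
    proof (cases "j1 = j2")
      case True thus ?thesis using eq by simp
    next
      case False
      define m where "m = j1 + (?p - j2)"
      have cm: "(of_nat m :: 'a) = of_nat j1 - of_nat j2"
        using h by (simp add: m_def of_nat_diff)
      have "(of_nat j1 :: 'a) \<noteq> of_nat j2" using ff_of_nat_inj[of j1 j2] h False by auto
      hence nz: "(of_nat m :: 'a) \<noteq> 0" using cm by simp
      have "of_nat m * x = of_nat j1 * x - of_nat j2 * x" by (simp add: cm left_diff_distrib)
      also have "\<dots> = h2 - h1" using eq by (metis add_diff_cancel_left' add_diff_eq diff_add_eq_diff_diff_swap diff_diff_eq2 add.commute diff_add_cancel)
      finally have "of_nat m * x = h2 - h1" .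
      hence "x = of_nat (m ^ (?p - 2)) * (h2 + - h1)"
        using ff_prime_field_inv[OF nz]
        by (metis mult.assoc mult_1 diff_conv_add_uminus)
      moreover have "- h1 \<in> H" using addsub_minus[OF sub h(1)] .
      hence "h2 + - h1 \<in> H" using sub h(3) unfolding addsub_def by blast
      ultimately have "x \<in> H" using addsub_of_nat[OF sub, of "h2 + - h1" "m ^ (CHAR('a) - 2)"] by simp
      thus ?thesis using x by simp
    qed
  qed
  show "card H' = ?p * card H"
    unfolding H'_def by (simp add: card_image[OF inj] card_cartesian_product)
qed

lemma ff_card_prime_power: "\<exists>n. CARD('a::{field,finite}) = CHAR('a) ^ n"
proof -
  let ?p = "CHAR('a)"
  have main: "(\<exists>H::'a set. addsub H \<and> card H = ?p ^ n) \<or> (\<exists>m. CARD('a) = ?p ^ m)" for n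
  proof (induction n)
    case 0
    have "addsub {0::'a}" by (simp add: addsub_def)
    thus ?case by (intro disjI1 exI[of _ "{0}"]) simp
  next
    case (Suc n)
    thus ?case
    proof
      assume "\<exists>H::'a set. addsub H \<and> card H = ?p ^ n"
      then obtain H :: "'a set" where H: "addsub H" "card H = ?p ^ n" by blast
      show ?case
      proof (cases "H = UNIV")
        case True thus ?thesis using H by auto
      next
        case False
        then obtain x where "x \<notin> H" by auto
        from addsub_extend[OF H(1) this] H(2) show ?thesis
          by (intro disjI1) (auto simp: mult.commute)
      qed
    qed simp
  qed
  have "\<not> (\<exists>H::'a set. addsub H \<and> card H = ?p ^ CARD('a))"
  proof
    assume "\<exists>H::'a set. addsub H \<and> card H = ?p ^ CARD('a)"
    then obtain H :: "'a set" where "card H = ?p ^ CARD('a)" by blast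
    moreover have "card H \<le> CARD('a)" by (rule card_mono) auto
    moreover have "CARD('a) < 2 ^ CARD('a)" by (rule less_exp)
    moreover have "2 ^ CARD('a) \<le> ?p ^ CARD('a)"
      using ff_prime_char[where 'a='a] prime_ge_2_nat by (intro power_mono) auto
    ultimately show False by linarith
  qed
  thus ?thesis using main by blast
qed


lemma ff_deg_prop:
  "CHAR('a::{field,finite}) ^ ff_deg TYPE('a) = CARD('a)" "ff_deg TYPE('a) > 0"
proof -
  obtain n where n: "CARD('a) = CHAR('a) ^ n" using ff_card_prime_power by blast
  show 1: "CHAR('a::{field,finite}) ^ ff_deg TYPE('a) = CARD('a)"
    unfolding ff_deg_def by (rule LeastI[of _ n]) (use n in simp)
  show "ff_deg TYPE('a) > 0"
  proof (rule ccontr)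
    assume "\<not> ff_deg TYPE('a) > 0"
    hence "CARD('a) = 1" using 1 by simp
    thus False using ff_card_ge2[where 'a='a] by simp
  qed
qed

lemma ff_pow_card: "(x::'a::{field,finite}) ^ CARD('a) = x"
proof (cases "x = 0")
  case False
  have "x * (\<Prod>y\<in>UNIV-{0}. x * y) = x * x ^ (card (UNIV :: 'a set) - 1) * \<Prod>(UNIV-{0})"
    by (simp add: prod.distrib mult_ac)
  also have "x * x ^ (card (UNIV :: 'a set) - 1) = x ^ Suc (card (UNIV :: 'a set) - 1)"
    by (subst power_Suc) auto
  also have "Suc (card (UNIV :: 'a set) - 1) = card (UNIV :: 'a set)"
    using finite_UNIV_card_ge_0[where ?'a = 'a] by simp
  also have "(\<Prod>y\<in>UNIV-{0}. x * y) = (\<Prod>y\<in>UNIV-{0}. y)"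
    by (rule prod.reindex_bij_witness[of _ "\<lambda>y. y / x" "\<lambda>y. x * y"]) (use False in auto)
  finally show ?thesis
    by simp
qed (use finite_UNIV_card_ge_0[where ?'a = 'a] in auto)

lemma abs_trace_frob: "abs_trace (x::'a::{field,finite}) ^ CHAR('a) = abs_trace x"
proof -
  let ?p = "CHAR('a)" and ?n = "ff_deg TYPE('a)"
  have "abs_trace x ^ ?p = (\<Sum>j<?n. (x ^ (?p ^ j)) ^ ?p)"
    unfolding abs_trace_def by (rule freshmans_dream_sum) (simp_all add: ff_prime_char)
  also have "\<dots> = (\<Sum>j<?n. x ^ (?p ^ Suc j))"
    by (simp add: power_mult[symmetric] mult.commute)
  also have "\<dots> = (\<Sum>j<Suc ?n. x ^ (?p ^ j)) - x ^ (?p ^ 0)"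
    by (subst sum.lessThan_Suc_shift) simp
  also have "\<dots> = (\<Sum>j<?n. x ^ (?p ^ j)) + x ^ (?p ^ ?n) - x"
    by simp
  also have "x ^ (?p ^ ?n) = x" using ff_deg_prop(1)[where 'a='a] ff_pow_card by simp
  finally show ?thesis unfolding abs_trace_def by simp
qed

lemma prime_field_roots:
  assumes "(y::'a::{field,finite}) ^ CHAR('a) = y"
  shows "\<exists>m<CHAR('a). of_nat m = y"
proof -
  let ?p = "CHAR('a)"
  have p2: "?p \<ge> 2" using ff_prime_char[where 'a='a] prime_ge_2_nat by blast
  define P :: "'a poly" where "P = monom 1 ?p - monom 1 1"
  have cP: "coeff P ?p = 1" using p2 by (simp add: P_def coeff_monom)
  hence P0: "P \<noteq> 0" by auto
  have dP: "degree P \<le> ?p"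
    unfolding P_def using p2 by (intro degree_diff_le) (auto intro: order.trans[OF degree_monom_le])
  let ?R = "{x. poly P x = 0}"
  let ?S = "of_nat ` {..<?p} :: 'a set"
  have SR: "?S \<subseteq> ?R" by (auto simp: P_def poly_monom ff_of_nat_pow_char)
  have cS: "card ?S = ?p"
    by (subst card_image) (auto intro!: inj_onI dest: ff_of_nat_inj)
  have "card ?R \<le> ?p" using card_poly_roots_bound[OF P0] dP by linarith
  moreover have "card ?S \<le> card ?R" using SR by (intro card_mono) auto
  ultimately have "?S = ?R" using SR cS by (intro card_subset_eq) auto
  moreover have "y \<in> ?R" using assms by (simp add: P_def poly_monom)
  ultimately have "y \<in> ?S" by simp
  thus ?thesis by auto
qed

lemma trace_nat_props:
  "trace_nat (x::'a::{field,finite}) < CHAR('a)" "of_nat (trace_nat x) = abs_trace x"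
proof -
  obtain m where m: "m < CHAR('a)" "of_nat m = abs_trace x"
    using prime_field_roots[OF abs_trace_frob] by blast
  have "trace_nat x \<le> m" unfolding trace_nat_def by (rule Least_le) (rule m(2))
  thus "trace_nat x < CHAR('a)" using m by simp
  show "of_nat (trace_nat x) = abs_trace x" unfolding trace_nat_def by (rule LeastI) (rule m(2))
qed

lemma abs_trace_add: "abs_trace ((x::'a::{field,finite}) + y) = abs_trace x + abs_trace y"
  unfolding abs_trace_def
  by (simp add: freshmans_dream'[OF ff_prime_char] sum.distrib)

lemma abs_trace_nontriv: "\<exists>x::'a::{field,finite}. abs_trace x \<noteq> 0"
proof -
  let ?p = "CHAR('a)" and ?n = "ff_deg TYPE('a)"
  have p2: "?p \<ge> 2" using ff_prime_char[where 'a='a] prime_ge_2_nat by blast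
  have n0: "?n > 0" by (rule ff_deg_prop)
  define T :: "'a poly" where "T = (\<Sum>j<?n. monom 1 (?p ^ j))"
  have "coeff T (?p ^ (?n - 1)) = (\<Sum>j<?n. if ?p ^ j = ?p ^ (?n - 1) then 1 else 0)"
    by (simp add: T_def coeff_sum coeff_monom)
  also have "\<dots> = (\<Sum>j\<in>{?n - 1}. 1)"
    using p2 n0 by (intro sum.mono_neutral_cong_right) (auto simp: power_inject_exp)
  finally have "coeff T (?p ^ (?n - 1)) = 1" by simp
  hence T0: "T \<noteq> 0" by auto
  have dT: "degree T \<le> ?p ^ (?n - 1)"
    unfolding T_def
    by (intro degree_sum_le) (auto intro!: order.trans[OF degree_monom_le] power_increasing simp: p2 Suc_le_eq prime_gt_0_nat[OF ff_prime_char])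
  have "card {x. poly T x = 0} < CARD('a)"
  proof -
    have "card {x. poly T x = 0} \<le> ?p ^ (?n - 1)" using card_poly_roots_bound[OF T0] dT by linarith
    also have "\<dots> < ?p ^ ?n" using p2 n0 by (intro power_strict_increasing) auto
    finally show ?thesis using ff_deg_prop(1)[where 'a='a] by simp
  qed
  hence "{x. poly T x = 0} \<noteq> UNIV" by auto
  then obtain x where "poly T x \<noteq> 0" by auto
  moreover have "poly T x = abs_trace x"
    by (simp add: T_def abs_trace_def poly_sum poly_monom)
  ultimately show ?thesis by auto
qed


lemma exp_mod_char:
  assumes "(p::nat) > 0"
  shows "exp (2 * pi * \<i> * of_nat (a + p * c) / of_nat p) = exp (2 * pi * \<i> * of_nat a / of_nat p)"
proof -
  have "2 * pi * \<i> * of_nat (a + p * c) / of_nat p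
        = 2 * pi * \<i> * of_nat a / of_nat p + \<i> * (of_nat c * (of_real pi * 2))"
    using assms by (simp add: field_simps)
  thus ?thesis by (simp only: exp_add exp_2pi_1_nat) simp
qed

lemma psi_add: "psi ((x::'a::{field,finite}) + y) = psi x * psi y"
proof -
  let ?p = "CHAR('a)"
  have p0: "?p > 0" using prime_gt_0_nat[OF ff_prime_char] .
  have "(of_nat (trace_nat (x + y)) :: 'a) = of_nat (trace_nat x + trace_nat y)"
    by (simp add: trace_nat_props abs_trace_add)
  hence "[trace_nat (x + y) = trace_nat x + trace_nat y] (mod ?p)"
    by (metis of_nat_eq_iff_cong_CHAR)
  hence e: "trace_nat (x + y) = (trace_nat x + trace_nat y) mod ?p"
    using trace_nat_props(1)[of "x+y"] by (simp add: cong_def)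
  have "psi x * psi y = exp (2 * pi * \<i> * of_nat (trace_nat x + trace_nat y) / of_nat ?p)"
    by (simp add: psi_def exp_add[symmetric] add_divide_distrib distrib_left)
  also have "trace_nat x + trace_nat y = (trace_nat x + trace_nat y) mod ?p + ?p * ((trace_nat x + trace_nat y) div ?p)"
    by simp
  also have "exp (2 * pi * \<i> * of_nat \<dots> / of_nat ?p) = psi (x + y)"
    unfolding psi_def e by (rule exp_mod_char[OF p0])
  finally show ?thesis ..
qed

lemma psi_0: "psi (0::'a::{field,finite}) = 1"
proof -
  have "abs_trace (0::'a) = 0"
    unfolding abs_trace_def using prime_gt_0_nat[OF ff_prime_char[where 'a='a]] by (simp add: power_0_left)
  hence "(of_nat (trace_nat (0::'a)) :: 'a) = of_nat 0" by (simp add: trace_nat_props)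
  hence "trace_nat (0::'a) = 0"
    using ff_of_nat_inj[where 'a='a, of "trace_nat (0::'a)" 0] trace_nat_props(1)[of "0::'a"]
      prime_gt_0_nat[OF ff_prime_char[where 'a='a]] by simp
  thus ?thesis by (simp add: psi_def)
qed

lemma psi_nontriv: "\<exists>x::'a::{field,finite}. psi x \<noteq> 1"
proof -
  let ?p = "CHAR('a)"
  obtain x :: 'a where x: "abs_trace x \<noteq> 0" using abs_trace_nontriv by blast
  have "trace_nat x \<noteq> 0" using x trace_nat_props(2)[of x] by (metis of_nat_0)
  hence m: "0 < real (trace_nat x)" "real (trace_nat x) < real ?p" using trace_nat_props(1)[of x] by auto
  have p0: "real ?p > 0" using m by linarith
  have "psi x \<noteq> 1"
  proof
    assume "psi x = 1"
    then obtain n :: int where "Im (2 * pi * \<i> * of_nat (trace_nat x) / of_nat ?p) = of_int (2 * n) * pi"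
      unfolding psi_def exp_eq_1 by blast
    hence "2 * pi * real (trace_nat x) / real ?p = 2 * real_of_int n * pi"
      by (simp add: Im_divide_of_nat)
    hence "pi * (2 * real (trace_nat x)) = pi * (2 * (real_of_int n * real ?p))"
      using p0 by (simp add: field_simps)
    hence e: "real (trace_nat x) = real_of_int n * real ?p" by simp
    have "n \<le> 0 \<or> n \<ge> 1" by arith
    thus False
    proof
      assume "n \<le> 0"
      hence "real_of_int n * real ?p \<le> 0" using p0 by (simp add: mult_nonpos_nonneg)
      thus False using e m by linarith
    next
      assume "n \<ge> 1"
      hence "real_of_int n * real ?p \<ge> 1 * real ?p" using p0 by (intro mult_right_mono) auto
      thus False using e m by linarith
    qed
  qed
  thus ?thesis by blast
qed

lemma psi_sum_0: "(\<Sum>x\<in>UNIV. psi (x::'a::{field,finite})) = 0"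
proof -
  obtain x0 :: 'a where x0: "psi x0 \<noteq> 1" using psi_nontriv by blast
  have "(\<Sum>x\<in>UNIV. psi (x::'a)) = (\<Sum>x\<in>UNIV. psi (x + x0))"
    by (rule sum.reindex_bij_witness[of _ "\<lambda>y. y + x0" "\<lambda>y. y - x0"]) auto
  also have "\<dots> = psi x0 * (\<Sum>x\<in>UNIV. psi (x::'a))"
    by (simp add: psi_add sum_distrib_left mult.commute)
  finally have "(1 - psi x0) * (\<Sum>x\<in>UNIV. psi (x::'a)) = 0" by (simp add: algebra_simps)
  thus ?thesis using x0 by simp
qed

lemma psi_sum_scale:
  "(\<Sum>x\<in>UNIV. psi (c * (x::'a::{field,finite}))) = (if c = 0 then of_nat CARD('a) else 0)"
proof (cases "c = 0")
  case True thus ?thesis by (simp add: psi_0)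
next
  case False
  have "(\<Sum>x\<in>UNIV. psi (c * x)) = (\<Sum>x\<in>UNIV. psi (x::'a))"
    by (rule sum.reindex_bij_witness[of _ "\<lambda>y. y / c" "\<lambda>y. c * y"]) (use False in auto)
  thus ?thesis using False psi_sum_0 by simp
qed

lemma psi_sum_fun: "psi (\<Sum>i\<in>I. f i :: 'a::{field,finite}) = (\<Prod>i\<in>I. psi (f i))"
  by (induction I rule: infinite_finite_induct) (simp_all add: psi_0 psi_add)

lemma psi_minus: "psi (x - (y::'a::{field,finite})) = psi x * psi (- y)"
  by (metis diff_conv_add_uminus psi_add)


lemma ff_pow_qm1: "(x::'a::{field,finite}) \<noteq> 0 \<Longrightarrow> x ^ (CARD('a) - 1) = 1"
proof -
  assume x: "x \<noteq> 0"
  have "x * x ^ (CARD('a) - 1) = x ^ CARD('a)"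
  proof -
    have "CARD('a) = Suc (CARD('a) - 1)" using ff_card_ge2[where 'a='a] by simp
    hence "x ^ CARD('a) = x ^ Suc (CARD('a) - 1)" by (rule arg_cong)
    thus ?thesis by (metis power_Suc)
  qed
  also have "\<dots> = x * 1" by (simp add: ff_pow_card)
  finally show ?thesis using x by simp
qed

lemma pow_mod_eq: "(x::'a::monoid_mult) ^ m = 1 \<Longrightarrow> x ^ n = x ^ (n mod m)"
proof -
  assume h: "x ^ m = 1"
  have "x ^ (m * (n div m) + n mod m) = x ^ (n mod m)" by (simp only: power_add power_mult h power_one mult_1)
  thus ?thesis by (metis mult_div_mod_eq)
qed

lemma ff_pow_cong:
  assumes "[a = b] (mod (CARD('a) - 1))" "a > 0" "b > 0"
  shows "(x::'a::{field,finite}) ^ a = x ^ b"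
proof (cases "x = 0")
  case True thus ?thesis using assms by (simp add: zero_power)
next
  case False
  have 1: "x ^ (CARD('a) - 1) = 1" by (rule ff_pow_qm1[OF False])
  have "x ^ a = x ^ (a mod (CARD('a) - 1))" by (rule pow_mod_eq[OF 1])
  also have "\<dots> = x ^ (b mod (CARD('a) - 1))" using assms(1) by (simp add: cong_def)
  also have "\<dots> = x ^ b" by (rule pow_mod_eq[OF 1, symmetric])
  finally show ?thesis .
qed

lemma inv_exp_props:
  assumes "s > 0" "coprime s (CARD('a::{field,finite}) - 1)"
  shows "inv_exp TYPE('a) s > 0" "[s * inv_exp TYPE('a) s = 1] (mod (CARD('a) - 1))"
proof -
  obtain x where x: "[s * x = Suc 0] (mod (CARD('a) - 1))" using cong_solve_coprime_nat[OF assms(2)] by blast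
  have z: "[s * (CARD('a) - 1) = 0] (mod (CARD('a) - 1))" by (simp add: cong_def)
  have "[s * x + s * (CARD('a) - 1) = Suc 0 + 0] (mod (CARD('a) - 1))"
    by (rule cong_add[OF x z])
  hence "[s * (x + (CARD('a) - 1)) = 1] (mod (CARD('a) - 1))" by (metis distrib_left One_nat_def add_0_right)
  moreover have "x + (CARD('a) - 1) > 0" using ff_card_ge2[where 'a='a] by simp
  ultimately have ex: "\<exists>s'. s' > 0 \<and> [s * s' = 1] (mod (CARD('a) - 1))" by blast
  have "inv_exp TYPE('a) s > 0 \<and> [s * inv_exp TYPE('a) s = 1] (mod (CARD('a) - 1))"
    unfolding inv_exp_def by (rule someI_ex[OF ex])
  thus "inv_exp TYPE('a) s > 0" "[s * inv_exp TYPE('a) s = 1] (mod (CARD('a) - 1))" by auto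
qed

lemma pow_inv_exp:
  assumes "s > 0" "coprime s (CARD('a::{field,finite}) - 1)"
  shows "((x::'a) ^ s) ^ inv_exp TYPE('a) s = x" "(x ^ inv_exp TYPE('a) s) ^ s = x"
proof -
  note e = inv_exp_props[OF assms]
  have "x ^ (s * inv_exp TYPE('a) s) = x ^ 1"
    by (rule ff_pow_cong) (use e assms in auto)
  thus "((x::'a) ^ s) ^ inv_exp TYPE('a) s = x" by (simp add: power_mult)
  thus "(x ^ inv_exp TYPE('a) s) ^ s = x" by (simp add: power_mult[symmetric] mult.commute)
qed


definition Pk :: "nat \<Rightarrow> (nat \<Rightarrow> 'a::{field,finite}) set" where
  "Pk k = PiE {..<k} (\<lambda>_. UNIV)"
definition Af :: "nat \<Rightarrow> (nat \<Rightarrow> 'a::{field,finite}) \<Rightarrow> (nat \<Rightarrow> 'a) \<Rightarrow> 'a" where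
  "Af k t v = (\<Sum>i<k. t i * v i)"
definition Bf :: "nat \<Rightarrow> nat \<Rightarrow> (nat \<Rightarrow> 'a::{field,finite}) \<Rightarrow> 'a" where
  "Bf s k v = (\<Sum>i<k. v i ^ s)"
definition sc :: "nat \<Rightarrow> 'a::{field,finite} \<Rightarrow> (nat \<Rightarrow> 'a) \<Rightarrow> (nat \<Rightarrow> 'a)" where
  "sc k y v = restrict (\<lambda>i. y * v i) {..<k}"

lemma finite_Pk [simp]: "finite (Pk k)"
  unfolding Pk_def by (intro finite_PiE) auto

lemma sc_mem [simp]: "sc k y v \<in> Pk k"
  unfolding Pk_def sc_def by auto

lemma Af_sc: "Af k t (sc k y v) = y * Af k t v"
  unfolding Af_def sc_def by (simp add: sum_distrib_left mult_ac)

lemma Bf_sc: "Bf s k (sc k y v) = y ^ s * Bf s k v"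
  unfolding Bf_def sc_def by (simp add: sum_distrib_left power_mult_distrib)

lemma sc_sc: "sc k a (sc k b v) = sc k (a * b) v"
  unfolding sc_def by (simp add: restrict_def fun_eq_iff mult.assoc)

lemma sc_1: "v \<in> Pk k \<Longrightarrow> sc k 1 v = v"
  unfolding sc_def Pk_def by (auto simp: restrict_def fun_eq_iff PiE_def extensional_def)

lemma split_sum:
  "(\<Sum>w\<in>{w\<in>Pk k. Af k t w \<noteq> 0}. f w) =
   (\<Sum>v\<in>{v\<in>Pk k. Af k t v = 1}. \<Sum>y\<in>{y::'a::{field,finite}. y \<noteq> 0}. f (sc k y v))"
proof -
  have "(\<Sum>v\<in>{v\<in>Pk k. Af k t v = 1}. \<Sum>y\<in>{y::'a. y \<noteq> 0}. f (sc k y v)) =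
        (\<Sum>(v,y)\<in>{v\<in>Pk k. Af k t v = 1} \<times> {y::'a. y \<noteq> 0}. f (sc k y v))"
    by (rule sum.cartesian_product)
  also have "\<dots> = (\<Sum>w\<in>{w\<in>Pk k. Af k t w \<noteq> 0}. f w)"
    by (rule sum.reindex_bij_witness[of _ "\<lambda>w. (sc k (1 / Af k t w) w, Af k t w)" "\<lambda>(v,y). sc k y v"])
       (auto simp: Af_sc sc_sc sc_1)
  finally show ?thesis ..
qed



lemma sum_pow_s:
  assumes "\<forall>x::'a. (x ^ s) ^ e = x" "\<forall>x::'a. (x ^ e) ^ s = x"
  shows "(\<Sum>x\<in>UNIV. f (x ^ s)) = (\<Sum>x\<in>UNIV. f (x::'a::{field,finite}))"
  by (rule sum.reindex_bij_witness[of _ "\<lambda>y. y ^ e" "\<lambda>y. y ^ s"]) (use assms in auto)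

lemma sumW:
  assumes s: "s > 0" and pe: "\<forall>x::'a. (x ^ s) ^ e = x" "\<forall>x::'a. (x ^ e) ^ s = x"
  shows "(\<Sum>a\<in>{x::'a::{field,finite}. x \<noteq> 0}. W s a) = of_nat CARD('a)"
proof -
  have W0: "W s (0::'a) = 0" unfolding W_def using sum_pow_s[OF pe, of psi] psi_sum_0 by simp
  have pt: "\<And>(a::'a) x. psi (x ^ s - a * x) = psi (x ^ s) * psi ((- x) * a)"
    by (simp add: psi_minus mult.commute)
  have "(\<Sum>a\<in>UNIV. W s (a::'a)) = (\<Sum>a\<in>UNIV. \<Sum>x\<in>UNIV. psi (x ^ s) * psi ((- x) * (a::'a)))"
    unfolding W_def by (simp only: pt)
  also have "\<dots> = (\<Sum>x\<in>UNIV. psi (x ^ s) * (\<Sum>a\<in>UNIV. psi ((- x) * (a::'a))))"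
    by (subst sum.swap) (simp add: sum_distrib_left)
  also have ps: "\<And>x::'a. (\<Sum>a\<in>UNIV. psi ((- x) * a)) = (if x = 0 then of_nat CARD('a) else 0)"
    using psi_sum_scale by (metis neg_equal_0_iff_equal)
  have "(\<Sum>x\<in>UNIV. psi (x ^ s) * (\<Sum>a\<in>UNIV. psi ((- x) * (a::'a))))
     = (\<Sum>x\<in>UNIV. psi (x ^ s) * (if x = (0::'a) then of_nat CARD('a) else 0))" by (simp only: ps)
  also have "\<dots> = (\<Sum>x\<in>UNIV. if x = (0::'a) then of_nat CARD('a) else 0)"
    by (intro sum.cong refl) (simp add: psi_0 s zero_power)
  also have "\<dots> = of_nat CARD('a)" by simp
  finally have tot: "(\<Sum>a\<in>UNIV. W s (a::'a)) = of_nat CARD('a)" .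
  have "(\<Sum>a\<in>UNIV. W s (a::'a)) = W s (0::'a) + (\<Sum>a\<in>UNIV-{0::'a}. W s a)" by (simp add: sum.remove[of UNIV 0])
  moreover have "{x::'a. x \<noteq> 0} = UNIV - {0}" by auto
  ultimately show ?thesis using tot W0 by simp
qed

lemma perv:
  assumes s: "s > 0" and e: "e > 0" and pe: "\<forall>x::'a. (x ^ s) ^ e = x" "\<forall>x::'a. (x ^ e) ^ s = x"
    and u: "u \<noteq> 0"
  shows "(\<Sum>a\<in>{x::'a::{field,finite}. x \<noteq> 0}. W s a * ((if b ^ e = u / a then 1 else 0) - (if b ^ e = 0 then 1 else 0)))
       = (\<Sum>y\<in>{y::'a. y \<noteq> 0}. psi (y ^ s * b - u * y) - psi (y ^ s * b))"
proof -
  have "(\<Sum>y\<in>{y::'a. y \<noteq> 0}. psi (y ^ s * b - u * y) - psi (y ^ s * b))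
        = (\<Sum>y\<in>UNIV. psi (y ^ s * b - u * y) - psi (y ^ s * b))"
    by (rule sum.mono_neutral_left) (use s in auto)
  also have "\<dots> = (\<Sum>y\<in>UNIV. psi (y ^ s * b - u * y)) - (\<Sum>y\<in>UNIV. psi (y ^ s * b))"
    by (rule sum_subtractf)
  also have "(\<Sum>y\<in>UNIV. psi (y ^ s * b)) = (if b = 0 then of_nat CARD('a) else 0)"
    using sum_pow_s[OF pe, of "\<lambda>z. psi (b * z)"] psi_sum_scale[of b] by (simp add: mult.commute)
  finally have R: "(\<Sum>y\<in>{y::'a. y \<noteq> 0}. psi (y ^ s * b - u * y) - psi (y ^ s * b))
     = (\<Sum>y\<in>UNIV. psi (y ^ s * b - u * y)) - (if b = 0 then of_nat CARD('a) else 0)" .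
  show ?thesis
  proof (cases "b = 0")
    case True
    have "(\<Sum>a\<in>{x::'a. x \<noteq> 0}. W s a * ((if b ^ e = u / a then 1 else 0) - (if b ^ e = 0 then 1 else 0)))
        = (\<Sum>a\<in>{x::'a. x \<noteq> 0}. - W s a)"
      by (intro sum.cong refl) (use True e u in \<open>auto simp: zero_power\<close>)
    also have "\<dots> = - of_nat CARD('a)" by (simp add: sum_negf sumW[OF s pe])
    finally have L: "(\<Sum>a\<in>{x::'a. x \<noteq> 0}. W s a * ((if b ^ e = u / a then 1 else 0) - (if b ^ e = 0 then 1 else 0)))
        = - of_nat CARD('a)" .
    have "(\<Sum>y\<in>UNIV. psi (y ^ s * b - u * (y::'a))) = (\<Sum>y\<in>UNIV. psi ((- u) * y))"
      using True by simp
    also have "\<dots> = 0" using psi_sum_scale[of "- u"] u by simp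
    finally show ?thesis using L R True by simp
  next
    case False
    define r where "r = b ^ e"
    have rs: "r ^ s = b" using pe(2) by (simp add: r_def)
    have r0: "r \<noteq> 0" using rs False s by auto
    have "(\<Sum>a\<in>{x::'a. x \<noteq> 0}. W s a * ((if b ^ e = u / a then 1 else 0) - (if b ^ e = 0 then 1 else 0)))
        = (\<Sum>a\<in>{x::'a. x \<noteq> 0}. if a = u / r then W s a else 0)"
    proof (intro sum.cong refl)
      fix a assume "a \<in> {x::'a. x \<noteq> 0}"
      hence a: "a \<noteq> 0" by simp
      have "(r = u / a) \<longleftrightarrow> (a = u / r)" using a r0 u by (auto simp: field_simps)
      thus "W s a * ((if b ^ e = u / a then 1 else 0) - (if b ^ e = 0 then 1 else 0)) = (if a = u / r then W s a else 0)"
        using r0 by (simp add: r_def[symmetric])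
    qed
    also have "\<dots> = W s (u / r)" using r0 u by (simp add: sum.delta)
    also have "\<dots> = (\<Sum>y\<in>UNIV. psi ((r * y) ^ s - u / r * (r * y)))"
      unfolding W_def
      by (rule sum.reindex_bij_witness[of _ "\<lambda>y. r * y" "\<lambda>y. y / r"]) (use r0 in auto)
    also have "\<dots> = (\<Sum>y\<in>UNIV. psi (y ^ s * b - u * y))"
      by (intro sum.cong refl) (simp add: power_mult_distrib rs r0 mult.commute)
    finally show ?thesis using R False by simp
  qed
qed


lemma Vt_sum:
  assumes "finite (UNIV::'a set)"
  shows "Vt_coef s k t (b::'a::{field,finite}) =
    (\<Sum>v\<in>{v\<in>Pk k. Af k t v = 1}. (if Bf s k v ^ inv_exp TYPE('a) s = b then 1 else 0)
                                   - (if Bf s k v ^ inv_exp TYPE('a) s = 0 then 1 else 0))"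
proof -
  let ?P1 = "{v\<in>Pk k. Af k t v = 1}"
  have fin: "finite ?P1" by simp
  have cQ: "complex_of_nat (Q s k t 1 c) = (\<Sum>v\<in>?P1. if Bf s k v ^ inv_exp TYPE('a) s = c then 1 else 0)" for c
  proof -
    have "{v \<in> PiE {..<k} (\<lambda>_. UNIV). (\<Sum>i<k. t i * v i) = 1 \<and> (\<Sum>i<k. v i ^ s) ^ inv_exp TYPE('a) s = c}
        = {v\<in>?P1. Bf s k v ^ inv_exp TYPE('a) s = c}"
      by (auto simp: Pk_def Af_def Bf_def)
    hence "complex_of_nat (Q s k t 1 c) = (\<Sum>v\<in>{v\<in>?P1. Bf s k v ^ inv_exp TYPE('a) s = c}. 1)"
      by (simp add: Q_def)
    also have "\<dots> = (\<Sum>v\<in>?P1. if Bf s k v ^ inv_exp TYPE('a) s = c then 1 else 0)"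
      by (rule sum.inter_filter[OF fin])
    finally show ?thesis .
  qed
  have "Vt_coef s k t b = complex_of_nat (Q s k t 1 b) - complex_of_nat (Q s k t 1 0)"
    by (simp add: Vt_coef_def)
  also have "\<dots> = (\<Sum>v\<in>?P1. (if Bf s k v ^ inv_exp TYPE('a) s = b then 1 else 0)
                                   - (if Bf s k v ^ inv_exp TYPE('a) s = 0 then 1 else 0))"
    by (simp only: cQ sum_subtractf)
  finally show ?thesis .
qed

theorem proposition5p13:
  fixes t :: "nat \<Rightarrow> 'a::{field,finite}" and p q s k :: nat
  assumes "CHAR('a) = p" and "CARD('a) = q"
    and "s > 0" and "coprime s (q - 1)"
    and "k > 0" and "\<forall>i<k. t i \<noteq> 0"
  shows "\<forall>u::'a. u \<noteq> 0 \<longrightarrow> Wt_coef s k t u = ga_mult (Wcoef s) (Vt_coef s k t) u"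
proof (intro allI impI)
  fix u :: 'a assume u: "u \<noteq> 0"
  define e where "e = inv_exp TYPE('a) s"
  have s: "s > 0" using assms by simp
  have cop: "coprime s (CARD('a) - 1)" using assms by simp
  have e0: "e > 0" unfolding e_def by (rule inv_exp_props[OF s cop])
  have pe: "\<forall>x::'a. (x ^ s) ^ e = x" "\<forall>x::'a. (x ^ e) ^ s = x"
    unfolding e_def using pow_inv_exp[OF s cop] by auto
  define g where "g w = psi (Bf s k w - u * Af k t w) - psi (Bf s k w)" for w
  let ?P1 = "{v\<in>Pk k. Af k t v = 1}"
  have L1: "Wt_coef s k t u = (\<Sum>w\<in>Pk k. psi (Bf s k w - u * Af k t w))"
  proof -
    have "Wt_coef s k t u = (\<Prod>i<k. \<Sum>x\<in>UNIV. psi (x ^ s - t i * u * x))"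
      by (simp add: Wt_coef_def W_def mult.assoc)
    also have "\<dots> = (\<Sum>w\<in>Pk k. \<Prod>i<k. psi (w i ^ s - t i * u * w i))"
      unfolding Pk_def by (rule prod_sum_PiE) auto
    also have "\<dots> = (\<Sum>w\<in>Pk k. psi (\<Sum>i<k. w i ^ s - t i * u * w i))"
      by (simp add: psi_sum_fun)
    also have "\<dots> = (\<Sum>w\<in>Pk k. psi (Bf s k w - u * Af k t w))"
      by (intro sum.cong refl arg_cong[where f=psi])
         (simp add: Bf_def Af_def sum_subtractf sum_distrib_left mult_ac)
    finally show ?thesis .
  qed
  have Z: "(\<Sum>w\<in>Pk k. psi (Bf s k w :: 'a)) = 0"
  proof -
    have "(\<Sum>w\<in>Pk k. psi (Bf s k (w::nat\<Rightarrow>'a))) = (\<Sum>w\<in>Pk k. \<Prod>i<k. psi ((w i::'a) ^ s))"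
      by (simp add: Bf_def psi_sum_fun)
    also have "\<dots> = (\<Prod>i<k. \<Sum>x\<in>UNIV. psi ((x::'a) ^ s))"
      unfolding Pk_def by (rule prod_sum_PiE[symmetric]) auto
    also have "(\<Sum>x\<in>UNIV. psi ((x::'a) ^ s)) = 0"
      using sum_pow_s[OF pe, of psi] psi_sum_0 by simp
    finally show ?thesis using assms(5) by simp
  qed
  have "Wt_coef s k t u = (\<Sum>w\<in>Pk k. g w)"
    unfolding g_def L1 sum_subtractf Z by simp
  also have "\<dots> = (\<Sum>w\<in>{w\<in>Pk k. Af k t w \<noteq> 0}. g w)"
    by (rule sum.mono_neutral_right) (auto simp: g_def)
  also have "\<dots> = (\<Sum>v\<in>?P1. \<Sum>y\<in>{y::'a. y \<noteq> 0}. g (sc k y v))"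
    by (rule split_sum)
  also have "\<dots> = (\<Sum>v\<in>?P1. \<Sum>y\<in>{y::'a. y \<noteq> 0}. psi (y ^ s * Bf s k v - u * y) - psi (y ^ s * Bf s k v))"
    by (intro sum.cong refl) (auto simp: g_def Af_sc Bf_sc)
  also have "\<dots> = (\<Sum>v\<in>?P1. \<Sum>a\<in>{x::'a. x \<noteq> 0}. W s a *
        ((if Bf s k v ^ e = u / a then 1 else 0) - (if Bf s k v ^ e = 0 then 1 else 0)))"
    by (rule sum.cong[OF refl]) (rule perv[OF s e0 pe u, symmetric])
  also have "\<dots> = (\<Sum>a\<in>{x::'a. x \<noteq> 0}. W s a * (\<Sum>v\<in>?P1.
        (if Bf s k v ^ e = u / a then 1 else 0) - (if Bf s k v ^ e = 0 then 1 else 0)))"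
    by (subst sum.swap) (simp add: sum_distrib_left)
  also have "\<dots> = (\<Sum>a\<in>{x::'a. x \<noteq> 0}. W s a * Vt_coef s k t (u / a))"
    by (simp add: Vt_sum e_def)
  also have "\<dots> = ga_mult (Wcoef s) (Vt_coef s k t) u"
    unfolding ga_mult_def Wcoef_def
  proof (intro sum.cong refl)
    fix a :: 'a assume "a \<in> {x. x \<noteq> 0}"
    hence a: "a \<noteq> 0" by simp
    have "(\<Sum>b\<in>{x::'a. x \<noteq> 0}. if a * b = u then W s a * Vt_coef s k t b else 0)
        = (\<Sum>b\<in>{x::'a. x \<noteq> 0}. if b = u / a then W s a * Vt_coef s k t b else 0)"
      by (intro sum.cong refl) (use a in \<open>auto simp: field_simps\<close>)
    also have "\<dots> = W s a * Vt_coef s k t (u / a)"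
      using a u by (simp add: sum.delta)
    finally show "W s a * Vt_coef s k t (u / a) =
        (\<Sum>b\<in>{x::'a. x \<noteq> 0}. if a * b = u then W s a * Vt_coef s k t b else 0)" ..
  qed
  finally show "Wt_coef s k t u = ga_mult (Wcoef s) (Vt_coef s k t) u" .
qed

end
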